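(* Let $\rho\in(0,1)$ and $0<\alpha\le\min\{1/2,2\rho,2(1-\rho)\}$. Let $\Theta=[-\alpha/20,\alpha/20]$ and for $\theta\in\Theta$ set $l_1(\theta)=\frac{4\rho-\alpha}{16-8\alpha}+\theta$, $l_2(\theta)=l_1(\theta)+\rho/2$, $r_2(\theta)=l_2(\theta)+1/4$, $r_1(\theta)=r_2(\theta)+(1-\rho)/2$, $w_1=2\pi/\rho$, $w_2=2\pi/(1-\rho)$. Define $f(x|\theta)=0$ for $x\notin[0,1]$ and for $x\in[0,1]$: $f(x|\theta)=2-\alpha$ if $x\in[0,l_1(\theta)]\cup[r_1(\theta),1]$; $f(x|\theta)=\alpha$ if $x\in(l_2(\theta),r_2(\theta)]$; $f(x|\theta)=\alpha+(1-\alpha)\big(\cos(w_1(x-l_1(\theta)))+1\big)$ if $x\in[l_1(\theta),l_2(\theta)]$; $f(x|\theta)=\alpha+(1-\alpha)\big(\cos(w_2(r_1(\theta)-x))+1\big)$ if $x\in[r_2(\theta),r_1(\theta)]$. Let $F_\theta$ be the corresponding CDF and $x_\theta^*$ the minimizer of $C_\theta(x)=\mathbb{E}_{X\sim f(\cdot|\theta)}[h(x-X)^++b(X-x)^+]$ where $h,b>0$ with $\rho=b/(h+b)$. Then for every $\theta\in\Theta$, $f(\cdot|\theta)$ is a well-defined probability density, and: (A1) $f(x|\theta)\ge\alpha$ for all $x\in[0,x_\theta^*]$; (A2) $\sup\{x:F_\theta(x)<1\}$ is bounded above by an absolute constant independent of $\alpha$; (A3) for every $x$, the map $\theta\mapsto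 f(x|\theta)$ is absolutely continuous on $\Theta$; (A4) for $X\sim f(\cdot|\theta)$, $\mathbb{E}_\theta\left[\frac{\partial}{\partial\theta}\log f(X|\theta)\right]=0$.
   Context: This is a family of "inverted-hat-shaped" parameterized demand densities used as hard instances for a newsvendor lower bound with linear overage cost $h$ and underage cost $b$. *)

theory Defs
  imports "HOL-Analysis.Analysis"
begin

definition nv_l1 :: "real \<Rightarrow> real \<Rightarrow> real \<Rightarrow> real" where
  "nv_l1 \<rho> \<alpha> \<theta> = (4 * \<rho> - \<alpha>) / (16 - 8 * \<alpha>) + \<theta>"
definition nv_l2 :: "real \<Rightarrow> real \<Rightarrow> real \<Rightarrow> real" where
  "nv_l2 \<rho> \<alpha> \<theta> = nv_l1 \<rho> \<alpha> \<theta> + \<rho> / 2"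
definition nv_r2 :: "real \<Rightarrow> real \<Rightarrow> real \<Rightarrow> real" where
  "nv_r2 \<rho> \<alpha> \<theta> = nv_l2 \<rho> \<alpha> \<theta> + 1 / 4"
definition nv_r1 :: "real \<Rightarrow> real \<Rightarrow> real \<Rightarrow> real" where
  "nv_r1 \<rho> \<alpha> \<theta> = nv_r2 \<rho> \<alpha> \<theta> + (1 - \<rho>) / 2"
definition nv_w1 :: "real \<Rightarrow> real" where "nv_w1 \<rho> = 2 * pi / \<rho>"
definition nv_w2 :: "real \<Rightarrow> real" where "nv_w2 \<rho> = 2 * pi / (1 - \<rho>)"

definition nv_cos1 :: "real \<Rightarrow> real \<Rightarrow> real \<Rightarrow> real \<Rightarrow> real" where
  "nv_cos1 \<rho> \<alpha> \<theta> x = \<alpha> + (1 - \<alpha>) * (cos (nv_w1 \<rho> * (x - nv_l1 \<rho> \<alpha> \<theta>)) + 1)"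
definition nv_cos2 :: "real \<Rightarrow> real \<Rightarrow> real \<Rightarrow> real \<Rightarrow> real" where
  "nv_cos2 \<rho> \<alpha> \<theta> x = \<alpha> + (1 - \<alpha>) * (cos (nv_w2 \<rho> * (nv_r1 \<rho> \<alpha> \<theta> - x)) + 1)"

text \<open>The density f(x|theta). The overlapping clauses of the paper are resolved by a
  fixed priority; the theorem asserts that every clause of the paper holds on its set.\<close>
definition nv_f :: "real \<Rightarrow> real \<Rightarrow> real \<Rightarrow> real \<Rightarrow> real" where
  "nv_f \<rho> \<alpha> \<theta> x =
    (if x < 0 \<or> x > 1 then 0
     else if x \<le> nv_l1 \<rho> \<alpha> \<theta> \<or> nv_r1 \<rho> \<alpha> \<theta> \<le> x then 2 - \<alpha>
     else if x \<le> nv_l2 \<rho> \<alpha> \<theta> then nv_cos1 \<rho> \<alpha> \<theta> x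
     else if x \<le> nv_r2 \<rho> \<alpha> \<theta> then \<alpha>
     else nv_cos2 \<rho> \<alpha> \<theta> x)"

definition nv_F :: "real \<Rightarrow> real \<Rightarrow> real \<Rightarrow> real \<Rightarrow> real" where
  "nv_F \<rho> \<alpha> \<theta> x = integral {..x} (nv_f \<rho> \<alpha> \<theta>)"

definition nv_cost :: "real \<Rightarrow> real \<Rightarrow> real \<Rightarrow> real \<Rightarrow> real \<Rightarrow> real \<Rightarrow> real" where
  "nv_cost h b \<rho> \<alpha> \<theta> x =
     integral UNIV (\<lambda>t. (h * max (x - t) 0 + b * max (t - x) 0) * nv_f \<rho> \<alpha> \<theta> t)"

definition abs_cont_on :: "real set \<Rightarrow> (real \<Rightarrow> real) \<Rightarrow> bool" where
  "abs_cont_on S g \<longleftrightarrow>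
    (\<forall>\<epsilon>>0. \<exists>\<delta>>0. \<forall>(n::nat) (a::nat \<Rightarrow> real) (b::nat \<Rightarrow> real).
       (\<forall>i<n. a i \<le> b i \<and> {a i..b i} \<subseteq> S) \<and>
       (\<forall>i<n. \<forall>j<n. i \<noteq> j \<longrightarrow> {a i<..<b i} \<inter> {a j<..<b j} = {}) \<and>
       (\<Sum>i<n. b i - a i) < \<delta>
       \<longrightarrow> (\<Sum>i<n. \<bar>g (b i) - g (a i)\<bar>) < \<epsilon>)"

end

theory Submission imports Defs begin

locale nvp =
  fixes rho al :: real
  assumes r0: "0 < rho" and r1: "rho < 1" and a0: "0 < al" and ah: "al \<le> 1/2"
begin

lemma l2_eq: "nv_l2 rho al t = nv_l1 rho al t + rho/2" by (simp add: nv_l2_def)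
lemma r2_eq: "nv_r2 rho al t = nv_l1 rho al t + rho/2 + 1/4" by (simp add: nv_r2_def l2_eq)
lemma r1_eq: "nv_r1 rho al t = nv_l1 rho al t + 3/4" by (simp add: nv_r1_def r2_eq field_simps)
lemma w1_half: "nv_w1 rho * (rho/2) = pi" using r0 by (simp add: nv_w1_def)
lemma w2_half: "nv_w2 rho * ((1-rho)/2) = pi" using r1 by (simp add: nv_w2_def)

lemma cos1_l1: "nv_cos1 rho al t (nv_l1 rho al t) = 2 - al" by (simp add: nv_cos1_def)
lemma cos1_l2: "nv_cos1 rho al t (nv_l1 rho al t + rho/2) = al"
proof -
  have "nv_w1 rho * (nv_l1 rho al t + rho/2 - nv_l1 rho al t) = pi" using w1_half by simp
  then show ?thesis by (simp add: nv_cos1_def)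
qed
lemma cos2_r1: "nv_cos2 rho al t (nv_l1 rho al t + 3/4) = 2 - al" by (simp add: nv_cos2_def r1_eq)
lemma cos2_r2: "nv_cos2 rho al t (nv_l1 rho al t + rho/2 + 1/4) = al"
proof -
  have "nv_r1 rho al t - (nv_l1 rho al t + rho/2 + 1/4) = (1-rho)/2" by (simp add: r1_eq)
  then have "nv_w2 rho * (nv_r1 rho al t - (nv_l1 rho al t + rho/2 + 1/4)) = pi" using w2_half by (simp only:)
  then show ?thesis by (simp add: nv_cos2_def)
qed

lemma cosp1: "0 \<le> cos (y::real) + 1" using cos_ge_minus_one[of y] by linarith
lemma cos1_ge: "al \<le> nv_cos1 rho al t x" using ah cosp1
  unfolding nv_cos1_def by (intro add_increasing2[OF mult_nonneg_nonneg]) auto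
lemma cos2_ge: "al \<le> nv_cos2 rho al t x" using ah
  unfolding nv_cos2_def by (intro add_increasing2[OF mult_nonneg_nonneg]) (auto simp: cosp1)

lemma f_out: "x < 0 \<or> x > 1 \<Longrightarrow> nv_f rho al t x = 0" by (auto simp: nv_f_def)
lemma f_A: "0 \<le> x \<Longrightarrow> x \<le> 1 \<Longrightarrow> x \<le> nv_l1 rho al t \<or> nv_r1 rho al t \<le> x \<Longrightarrow> nv_f rho al t x = 2 - al"
  by (auto simp: nv_f_def)
lemma f_B: "0 \<le> x \<Longrightarrow> x \<le> 1 \<Longrightarrow> nv_l1 rho al t \<le> x \<Longrightarrow> x \<le> nv_l2 rho al t \<Longrightarrow> nv_f rho al t x = nv_cos1 rho al t x"
proof -
  assume h: "0 \<le> x" "x \<le> 1" "nv_l1 rho al t \<le> x" "x \<le> nv_l2 rho al t"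
  show ?thesis
  proof (cases "x = nv_l1 rho al t")
    case True then show ?thesis using h by (simp add: nv_f_def cos1_l1)
  next
    case False then show ?thesis using h r0 r1 by (auto simp: nv_f_def r1_eq l2_eq)
  qed
qed
lemma f_C: "0 \<le> x \<Longrightarrow> x \<le> 1 \<Longrightarrow> nv_l2 rho al t \<le> x \<Longrightarrow> x \<le> nv_r2 rho al t \<Longrightarrow> nv_f rho al t x = al"
proof -
  assume h: "0 \<le> x" "x \<le> 1" "nv_l2 rho al t \<le> x" "x \<le> nv_r2 rho al t"
  show ?thesis
  proof (cases "x = nv_l2 rho al t")
    case True then show ?thesis using h r0 r1 by (simp add: nv_f_def cos1_l2 l2_eq r1_eq)
  next
    case False then show ?thesis using h r0 r1 by (auto simp: nv_f_def r1_eq l2_eq r2_eq)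
  qed
qed
lemma f_D: "0 \<le> x \<Longrightarrow> x \<le> 1 \<Longrightarrow> nv_r2 rho al t \<le> x \<Longrightarrow> x \<le> nv_r1 rho al t \<Longrightarrow> nv_f rho al t x = nv_cos2 rho al t x"
proof -
  assume h: "0 \<le> x" "x \<le> 1" "nv_r2 rho al t \<le> x" "x \<le> nv_r1 rho al t"
  show ?thesis
  proof (cases "x = nv_r2 rho al t")
    case True then show ?thesis using h r0 r1 by (simp add: nv_f_def cos2_r2 l2_eq r1_eq r2_eq)
  next
    case False
    show ?thesis
    proof (cases "x = nv_r1 rho al t")
      case True then show ?thesis using h by (simp add: nv_f_def cos2_r1 r1_eq)
    next
      case False then show ?thesis using h r0 r1 \<open>x \<noteq> nv_r2 rho al t\<close> by (auto simp: nv_f_def r1_eq l2_eq r2_eq)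
    qed
  qed
qed

lemma f_ge: "0 \<le> x \<Longrightarrow> x \<le> 1 \<Longrightarrow> al \<le> nv_f rho al t x"
  using cos1_ge cos2_ge ah by (auto simp: nv_f_def)
lemma f_nonneg: "0 \<le> nv_f rho al t x"
  using f_ge[of x t] a0 by (cases "x < 0 \<or> x > 1") (auto simp: f_out)

end

lemma ftc_spike:
  fixes G G' g :: "real \<Rightarrow> real"
  assumes "a \<le> b" "\<And>y. (G has_real_derivative G' y) (at y)" "\<And>y. a < y \<Longrightarrow> y < b \<Longrightarrow> g y = G' y"
    and "I = G b - G a"
  shows "(g has_integral I) {a..b}"
proof -
  have "(G' has_integral (G b - G a)) {a..b}"
    using assms(1) by (intro fundamental_theorem_of_calculus)
      (auto simp: has_real_derivative_iff_has_vector_derivative[symmetric] intro: has_field_derivative_at_within assms(2))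
  then show ?thesis
    using has_integral_spike_finite[of "{a,b}" "{a..b}" g G'] assms(3,4) by auto
qed

lemma cos_lip: "\<bar>cos a - cos b\<bar> \<le> \<bar>a - b\<bar>" for a b :: real
proof -
  have "\<bar>cos a - cos b\<bar> = 2*\<bar>sin((a+b)/2)\<bar>*\<bar>sin((b-a)/2)\<bar>" by (simp add: cos_diff_cos abs_mult)
  also have "\<dots> \<le> 2*1*\<bar>(b-a)/2\<bar>"
    using abs_sin_x_le_abs_x[of "(b-a)/2"] by (intro mult_mono) (auto simp: abs_sin_le_one)
  also have "\<dots> = \<bar>a - b\<bar>" by simp
  finally show ?thesis .
qed

definition lipS :: "real \<Rightarrow> (real \<Rightarrow> real) \<Rightarrow> real set \<Rightarrow> bool" where
  "lipS L g S \<longleftrightarrow> (\<forall>s\<in>S. \<forall>t\<in>S. \<bar>g s - g t\<bar> \<le> L * \<bar>s - t\<bar>)"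

lemma lipS_glue:
  assumes "lipS L g A" "lipS L g B" "p \<in> A" "p \<in> B" "\<forall>s\<in>A. s \<le> p" "\<forall>t\<in>B. p \<le> t" "0 \<le> L"
  shows "lipS L g (A \<union> B)"
proof -
  have key: "\<bar>g s - g t\<bar> \<le> L * \<bar>s - t\<bar>" if "s \<in> A" "t \<in> B" for s t
  proof -
    have "\<bar>g s - g t\<bar> \<le> \<bar>g s - g p\<bar> + \<bar>g p - g t\<bar>" by linarith
    also have "\<dots> \<le> L * \<bar>s - p\<bar> + L * \<bar>p - t\<bar>"
      using assms that unfolding lipS_def by (meson add_mono)
    also have "\<dots> = L * \<bar>s - t\<bar>"
    proof -
      have "s \<le> p" "p \<le> t" using assms that by auto
      then have "\<bar>s - p\<bar> = p - s" "\<bar>p - t\<bar> = t - p" "\<bar>s - t\<bar> = t - s" by auto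
      then show ?thesis by (simp add: algebra_simps)
    qed
    finally show ?thesis .
  qed
  show ?thesis unfolding lipS_def
  proof (intro ballI)
    fix s t assume "s \<in> A \<union> B" "t \<in> A \<union> B"
    then consider "s \<in> A" "t \<in> A" | "s \<in> B" "t \<in> B" | "s \<in> A" "t \<in> B" | "s \<in> B" "t \<in> A" by blast
    then show "\<bar>g s - g t\<bar> \<le> L * \<bar>s - t\<bar>"
    proof cases
      case 1 then show ?thesis using assms(1) unfolding lipS_def by blast
    next
      case 2 then show ?thesis using assms(2) unfolding lipS_def by blast
    next
      case 3 then show ?thesis using key by blast
    next
      case 4 then show ?thesis using key[of t s] by (simp add: abs_minus_commute)
    qed
  qed
qed

lemma lipS_const: "0 \<le> L \<Longrightarrow> (\<And>t. t \<in> S \<Longrightarrow> g t = k) \<Longrightarrow> lipS L g S"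
  unfolding lipS_def by simp

lemma lipS_abs_cont: "lipS L g UNIV \<Longrightarrow> 0 \<le> L \<Longrightarrow> abs_cont_on S g"
  unfolding abs_cont_on_def
proof (intro allI impI)
  fix e :: real assume L: "lipS L g UNIV" "0 \<le> L" and e: "0 < e"
  show "\<exists>d>0. \<forall>(n::nat) (a::nat \<Rightarrow> real) (b::nat \<Rightarrow> real).
       (\<forall>i<n. a i \<le> b i \<and> {a i..b i} \<subseteq> S) \<and>
       (\<forall>i<n. \<forall>j<n. i \<noteq> j \<longrightarrow> {a i<..<b i} \<inter> {a j<..<b j} = {}) \<and>
       (\<Sum>i<n. b i - a i) < d
       \<longrightarrow> (\<Sum>i<n. \<bar>g (b i) - g (a i)\<bar>) < e"
  proof (intro exI[of _ "e/(L+1)"] conjI allI impI)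
    show "0 < e/(L+1)" using e L by simp
    fix n :: nat and a b :: "nat \<Rightarrow> real"
    assume H: "(\<forall>i<n. a i \<le> b i \<and> {a i..b i} \<subseteq> S) \<and>
       (\<forall>i<n. \<forall>j<n. i \<noteq> j \<longrightarrow> {a i<..<b i} \<inter> {a j<..<b j} = {}) \<and>
       (\<Sum>i<n. b i - a i) < e/(L+1)"
    have "(\<Sum>i<n. \<bar>g (b i) - g (a i)\<bar>) \<le> (\<Sum>i<n. L * (b i - a i))"
    proof (rule sum_mono)
      fix i assume "i \<in> {..<n}"
      then have "a i \<le> b i" using H by auto
      then show "\<bar>g (b i) - g (a i)\<bar> \<le> L * (b i - a i)" using L unfolding lipS_def
        by (metis UNIV_I abs_of_nonneg diff_ge_0_iff_ge)
    qed
    also have "\<dots> = L * (\<Sum>i<n. b i - a i)" by (simp add: sum_distrib_left)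
    also have "\<dots> \<le> L * (e/(L+1))" using H L by (intro mult_left_mono) auto
    also have "\<dots> < e" using e L by (simp add: field_simps)
    finally show "(\<Sum>i<n. \<bar>g (b i) - g (a i)\<bar>) < e" .
  qed
qed

lemma deriv_local: "open U \<Longrightarrow> th \<in> U \<Longrightarrow> (\<And>t. t \<in> U \<Longrightarrow> k t = g t) \<Longrightarrow> (k has_real_derivative D) (at th) \<Longrightarrow> deriv g th = D"
  by (metis DERIV_imp_deriv has_field_derivative_transform_within_open)

context nvp begin

lemma l1_shift: "nv_l1 rho al t = nv_l1 rho al 0 + t" by (simp add: nv_l1_def)
lemma w1_pos: "0 < nv_w1 rho" using r0 by (simp add: nv_w1_def)
lemma w2_pos: "0 < nv_w2 rho" using r1 by (simp add: nv_w2_def)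

definition "Lc = (1 - al) * (nv_w1 rho + nv_w2 rho)"
lemma Lc_nonneg: "0 \<le> Lc" using ah w1_pos w2_pos by (simp add: Lc_def)

lemma A3_lip:
  assumes x: "0 \<le> x" "x \<le> 1"
  shows "lipS Lc (\<lambda>t. nv_f rho al t x) UNIV"
proof -
  define c where "c = nv_l1 rho al 0"
  have l1c: "nv_l1 rho al t = c + t" for t unfolding c_def by (rule l1_shift)
  define p1 p2 p3 p4 where "p1 = x - c - 3/4" and "p2 = x - c - rho/2 - 1/4"
    and "p3 = x - c - rho/2" and "p4 = x - c"
  have ord: "p1 \<le> p2" "p2 \<le> p3" "p3 \<le> p4" using r0 r1 by (auto simp: p1_def p2_def p3_def p4_def)
  have L0: "0 \<le> Lc" by (rule Lc_nonneg)
  have P1: "lipS Lc (\<lambda>t. nv_f rho al t x) {..p1}"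
    by (rule lipS_const[OF L0, where k="2-al"]) (use x in \<open>auto simp: p1_def r1_eq l1c intro!: f_A\<close>)
  have P5: "lipS Lc (\<lambda>t. nv_f rho al t x) {p4..}"
    by (rule lipS_const[OF L0, where k="2-al"]) (use x in \<open>auto simp: p4_def l1c intro!: f_A\<close>)
  have P3: "lipS Lc (\<lambda>t. nv_f rho al t x) {p2..p3}"
    by (rule lipS_const[OF L0, where k="al"]) (use x in \<open>auto simp: p2_def p3_def l2_eq r2_eq l1c intro!: f_C\<close>)
  have P4: "lipS Lc (\<lambda>t. nv_f rho al t x) {p3..p4}"
    unfolding lipS_def
  proof (intro ballI)
    fix s t assume st: "s \<in> {p3..p4}" "t \<in> {p3..p4}"
    have "nv_f rho al s x = nv_cos1 rho al s x" "nv_f rho al t x = nv_cos1 rho al t x"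
      using st x by (auto simp: p3_def p4_def l2_eq l1c intro!: f_B)
    note that_eqs = this
    have "\<bar>nv_f rho al s x - nv_f rho al t x\<bar> = (1-al) * \<bar>cos (nv_w1 rho * (x - (c+s))) - cos (nv_w1 rho * (x - (c+t)))\<bar>"
    proof -
      have "nv_f rho al s x - nv_f rho al t x = (1-al) * (cos (nv_w1 rho * (x - (c+s))) - cos (nv_w1 rho * (x - (c+t))))"
        using that_eqs by (simp add: nv_cos1_def l1c algebra_simps)
      then show ?thesis using ah by (simp add: abs_mult)
    qed
    also have "\<dots> \<le> (1-al) * \<bar>nv_w1 rho * (x - (c+s)) - nv_w1 rho * (x - (c+t))\<bar>"
      using ah by (intro mult_left_mono cos_lip) auto
    also have "\<dots> = (1-al) * nv_w1 rho * \<bar>s - t\<bar>"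
    proof -
      have "nv_w1 rho * (x - (c+s)) - nv_w1 rho * (x - (c+t)) = nv_w1 rho * (t - s)" by (simp add: algebra_simps)
      then show ?thesis using w1_pos ah by (simp add: abs_mult abs_minus_commute)
    qed
    also have "\<dots> \<le> Lc * \<bar>s - t\<bar>"
      using w2_pos ah unfolding Lc_def by (intro mult_right_mono) (auto simp: algebra_simps)
    finally show "\<bar>nv_f rho al s x - nv_f rho al t x\<bar> \<le> Lc * \<bar>s - t\<bar>" .
  qed
  have P2: "lipS Lc (\<lambda>t. nv_f rho al t x) {p1..p2}"
    unfolding lipS_def
  proof (intro ballI)
    fix s t assume st: "s \<in> {p1..p2}" "t \<in> {p1..p2}"
    have "nv_f rho al s x = nv_cos2 rho al s x" "nv_f rho al t x = nv_cos2 rho al t x"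
      using st x by (auto simp: p1_def p2_def r1_eq r2_eq l1c intro!: f_D)
    note that_eqs = this
    have "\<bar>nv_f rho al s x - nv_f rho al t x\<bar> = (1-al) * \<bar>cos (nv_w2 rho * ((c+s+3/4) - x)) - cos (nv_w2 rho * ((c+t+3/4) - x))\<bar>"
    proof -
      have "nv_f rho al s x - nv_f rho al t x = (1-al) * (cos (nv_w2 rho * ((c+s+3/4) - x)) - cos (nv_w2 rho * ((c+t+3/4) - x)))"
        using that_eqs by (simp add: nv_cos2_def r1_eq l1c algebra_simps)
      then show ?thesis using ah by (simp add: abs_mult)
    qed
    also have "\<dots> \<le> (1-al) * \<bar>nv_w2 rho * ((c+s+3/4) - x) - nv_w2 rho * ((c+t+3/4) - x)\<bar>"
      using ah by (intro mult_left_mono cos_lip) auto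
    also have "\<dots> = (1-al) * nv_w2 rho * \<bar>s - t\<bar>"
    proof -
      have "nv_w2 rho * ((c+s+3/4) - x) - nv_w2 rho * ((c+t+3/4) - x) = nv_w2 rho * (s - t)" by (simp add: algebra_simps)
      then show ?thesis using w2_pos ah by (simp add: abs_mult abs_minus_commute)
    qed
    also have "\<dots> \<le> Lc * \<bar>s - t\<bar>"
      using w1_pos ah unfolding Lc_def by (intro mult_right_mono) (auto simp: algebra_simps)
    finally show "\<bar>nv_f rho al s x - nv_f rho al t x\<bar> \<le> Lc * \<bar>s - t\<bar>" .
  qed
  have Q2: "lipS Lc (\<lambda>t. nv_f rho al t x) {..p2}"
  proof -
    have "{..p2} = {..p1} \<union> {p1..p2}" using ord by auto
    then show ?thesis using lipS_glue[OF P1 P2 _ _ _ _ L0, of p1] ord by auto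
  qed
  have Q3: "lipS Lc (\<lambda>t. nv_f rho al t x) {..p3}"
  proof -
    have "{..p3} = {..p2} \<union> {p2..p3}" using ord by auto
    then show ?thesis using lipS_glue[OF Q2 P3 _ _ _ _ L0, of p2] ord by auto
  qed
  have Q4: "lipS Lc (\<lambda>t. nv_f rho al t x) {..p4}"
  proof -
    have "{..p4} = {..p3} \<union> {p3..p4}" using ord by auto
    then show ?thesis using lipS_glue[OF Q3 P4 _ _ _ _ L0, of p3] ord by auto
  qed
  have "(UNIV::real set) = {..p4} \<union> {p4..}" by auto
  then show ?thesis using lipS_glue[OF Q4 P5 _ _ _ _ L0, of p4] by auto
qed

lemma A3: "abs_cont_on S (\<lambda>t. nv_f rho al t x)"
proof (cases "0 \<le> x \<and> x \<le> 1")
  case True then show ?thesis using A3_lip lipS_abs_cont Lc_nonneg by blast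
next
  case False
  then have "lipS 0 (\<lambda>t. nv_f rho al t x) UNIV" by (intro lipS_const[where k=0]) (auto simp: f_out)
  then show ?thesis using lipS_abs_cont by blast
qed

end


locale nvq = nvp +
  fixes th h b :: real
  assumes a2r: "al \<le> 2*rho" and a2r': "al \<le> 2*(1-rho)"
    and thl: "-al/20 \<le> th" and thu: "th \<le> al/20" and hp: "0 < h" and bp: "0 < b"
begin

abbreviation "L \<equiv> nv_l1 rho al th"
abbreviation "fth \<equiv> nv_f rho al th"

lemma Lpos: "0 < L"
proof -
  have "al*36 < al*(al*8) + rho*80" using a0 a2r mult_pos_pos[OF a0 a0] by linarith
  then have "al/20 < (4*rho-al)/(16-8*al)" using a0 ah by (simp add: field_simps)
  then show ?thesis using thl unfolding nv_l1_def by linarith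
qed

lemma Lr: "L + 3/4 < 1"
proof -
  have "al * 144 + rho * 320 < 320 + al * (al * 32)" using a0 a2r' by (smt (verit) mult_pos_pos)
  then have "(4*rho-al)/(16-8*al) + al/20 + 3/4 < 1" using a0 ah by (simp add: field_simps)
  then show ?thesis using thu unfolding nv_l1_def by linarith
qed

lemma cover: "{0..1} = {0..L} \<union> {L..L+rho/2} \<union> {L+rho/2..L+rho/2+1/4} \<union> {L+rho/2+1/4..L+3/4} \<union> {L+3/4..(1::real)}"
  using Lpos Lr r0 r1 by auto

lemma cos1_cont: "continuous_on S (nv_cos1 rho al th)"
  unfolding nv_cos1_def by (intro continuous_intros)
lemma cos2_cont: "continuous_on S (nv_cos2 rho al th)"
  unfolding nv_cos2_def by (intro continuous_intros)

lemma f_cont: "continuous_on {0..1} fth"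
proof -
  have c1: "continuous_on {0..L} fth"
    by (rule continuous_on_eq[OF continuous_on_const[of _ "2-al"]]) (use Lr in \<open>auto intro!: f_A[symmetric]\<close>)
  have c2: "continuous_on {L..L+rho/2} fth"
    by (rule continuous_on_eq[OF cos1_cont]) (use Lpos Lr r0 r1 in \<open>auto simp: l2_eq intro!: f_B[symmetric]\<close>)
  have c3: "continuous_on {L+rho/2..L+rho/2+1/4} fth"
    by (rule continuous_on_eq[OF continuous_on_const[of _ "al"]]) (use Lpos Lr r0 r1 in \<open>auto simp: l2_eq r2_eq intro!: f_C[symmetric]\<close>)
  have c4: "continuous_on {L+rho/2+1/4..L+3/4} fth"
    by (rule continuous_on_eq[OF cos2_cont]) (use Lpos Lr r0 r1 in \<open>auto simp: r1_eq r2_eq intro!: f_D[symmetric]\<close>)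
  have c5: "continuous_on {L+3/4..1} fth"
    by (rule continuous_on_eq[OF continuous_on_const[of _ "2-al"]]) (use Lpos in \<open>auto simp: r1_eq intro!: f_A[symmetric]\<close>)
  show ?thesis unfolding cover
    by (intro continuous_on_closed_Un closed_Un closed_atLeastAtMost c1 c2 c3 c4 c5)
qed

lemma w1L: "nv_w1 rho * (L + rho/2 - L) = pi" using w1_half by simp
lemma w2R: "nv_w2 rho * (nv_r1 rho al th - (L + rho/2 + 1/4)) = pi"
proof -
  have "nv_r1 rho al th - (L + rho/2 + 1/4) = (1-rho)/2" by (simp add: r1_eq)
  then show ?thesis using w2_half by (simp only:)
qed

lemma f_int01: "(fth has_integral 1) {0..1}"
proof -
  have w1nz: "nv_w1 rho \<noteq> 0" using w1_pos by simp
  have w2nz: "nv_w2 rho \<noteq> 0" using w2_pos by simp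
  have i1: "(fth has_integral ((2-al)*L)) {0..L}"
    by (rule ftc_spike[where G="\<lambda>y. (2-al)*y" and G'="\<lambda>_. 2-al"])
       (use Lpos Lr in \<open>auto intro!: derivative_eq_intros f_A\<close>)
  have i2: "(fth has_integral (rho/2)) {L..L+rho/2}"
  proof (rule ftc_spike[where G="\<lambda>y. al*y + (1-al)*(sin(nv_w1 rho*(y-L))/nv_w1 rho + y)"
        and G'="nv_cos1 rho al th"])
    show "L \<le> L + rho/2" using r0 by simp
    show "((\<lambda>y. al*y + (1-al)*(sin(nv_w1 rho*(y-L))/nv_w1 rho + y)) has_real_derivative nv_cos1 rho al th y) (at y)" for y
      unfolding nv_cos1_def using w1nz by (auto intro!: derivative_eq_intros simp: field_simps)
    show "fth y = nv_cos1 rho al th y" if "L < y" "y < L + rho/2" for y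
      using that Lpos Lr r0 r1 by (intro f_B) (auto simp: l2_eq)
    show "rho/2 = al*(L+rho/2) + (1-al)*(sin(nv_w1 rho*(L+rho/2-L))/nv_w1 rho + (L+rho/2))
        - (al*L + (1-al)*(sin(nv_w1 rho*(L-L))/nv_w1 rho + L))"
      by (simp only: w1L) (simp add: field_simps)
  qed
  have i3: "(fth has_integral (al/4)) {L+rho/2..L+rho/2+1/4}"
    by (rule ftc_spike[where G="\<lambda>y. al*y" and G'="\<lambda>_. al"])
       (use Lpos Lr r0 r1 in \<open>auto intro!: derivative_eq_intros f_C simp: l2_eq r2_eq algebra_simps\<close>)
  have i4: "(fth has_integral ((1-rho)/2)) {L+rho/2+1/4..L+3/4}"
  proof (rule ftc_spike[where G="\<lambda>y. al*y + (1-al)*(- sin(nv_w2 rho*(nv_r1 rho al th-y))/nv_w2 rho + y)"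
        and G'="nv_cos2 rho al th"])
    show "L+rho/2+1/4 \<le> L + 3/4" using r1 by simp
    show "((\<lambda>y. al*y + (1-al)*(- sin(nv_w2 rho*(nv_r1 rho al th-y))/nv_w2 rho + y)) has_real_derivative nv_cos2 rho al th y) (at y)" for y
      unfolding nv_cos2_def using w2nz by (auto intro!: derivative_eq_intros simp: field_simps)
    show "fth y = nv_cos2 rho al th y" if "L+rho/2+1/4 < y" "y < L + 3/4" for y
      using that Lpos Lr r0 r1 by (intro f_D) (auto simp: r1_eq r2_eq)
    have e: "nv_r1 rho al th - (L+3/4) = 0" by (simp add: r1_eq)
    show "(1-rho)/2 = al*(L+3/4) + (1-al)*(- sin(nv_w2 rho*(nv_r1 rho al th-(L+3/4)))/nv_w2 rho + (L+3/4))
        - (al*(L+rho/2+1/4) + (1-al)*(- sin(nv_w2 rho*(nv_r1 rho al th-(L+rho/2+1/4)))/nv_w2 rho + (L+rho/2+1/4)))"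
      by (simp only: w2R e) (simp add: field_simps)
  qed
  have i5: "(fth has_integral ((2-al)*(1/4 - L))) {L+3/4..1}"
  proof (rule ftc_spike[where G="\<lambda>y. (2-al)*y" and G'="\<lambda>_. 2-al"])
    show "L+3/4 \<le> 1" using Lr by simp
    show "((\<lambda>y. (2-al)*y) has_real_derivative 2-al) (at y)" for y
      by (auto intro!: derivative_eq_intros)
    show "fth y = 2-al" if "L+3/4 < y" "y < 1" for y using that Lpos Lr by (intro f_A) (auto simp: r1_eq)
    show "(2-al)*(1/4-L) = (2-al)*1 - (2-al)*(L+3/4)" by (simp add: field_simps)
  qed
  have "(fth has_integral ((2-al)*L + rho/2 + al/4 + (1-rho)/2 + (2-al)*(1/4 - L))) {0..1}"
    using Lpos Lr r0 r1
    by (intro has_integral_combine[OF _ _ has_integral_combine[OF _ _ has_integral_combine[OF _ _ has_integral_combine[OF _ _ i1 i2] i3] i4] i5]) auto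
  moreover have "(2-al)*L + rho/2 + al/4 + (1-rho)/2 + (2-al)*(1/4 - L) = 1" by (simp add: field_simps)
  ultimately show ?thesis by simp
qed

lemma f_intU: "(fth has_integral 1) UNIV"
  by (rule has_integral_on_superset[OF f_int01]) (auto simp: f_out)

lemma f_integrable: "fth integrable_on UNIV" using f_intU by blast
lemma f_integral: "integral UNIV fth = 1" using f_intU by (rule integral_unique)

end

context nvq begin

abbreviation "cst \<equiv> nv_cost h b rho al th"

lemma cg_int: "(\<lambda>t. (h * max (x - t) 0 + b * max (t - x) 0) * fth t) integrable_on UNIV"
proof -
  have "continuous_on {0..1} (\<lambda>t. (h * max (x - t) 0 + b * max (t - x) 0) * fth t)"
    by (intro continuous_intros f_cont)
  then have "(\<lambda>t. (h * max (x - t) 0 + b * max (t - x) 0) * fth t) integrable_on {0..1}"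
    by (rule integrable_continuous_interval)
  then show ?thesis by (rule integrable_on_superset) (auto simp: f_out)
qed

lemma cg_has: "((\<lambda>t. (h * max (x - t) 0 + b * max (t - x) 0) * fth t) has_integral cst x) UNIV"
  unfolding nv_cost_def using cg_int by (rule integrable_integral)

lemma cost_ge1: assumes x: "1 \<le> x" shows "cst x = cst 1 + h*(x-1)"
proof -
  have eq: "(h * max (x - t) 0 + b * max (t - x) 0) * fth t = (h * max (1 - t) 0 + b * max (t - 1) 0) * fth t + h*(x-1) * fth t" for t
  proof (cases "0 \<le> t \<and> t \<le> 1")
    case True then have "max (x-t) 0 = x - t" "max (t-x) 0 = 0" "max (1-t) 0 = 1-t" "max (t-1) 0 = 0" using x by auto
    then show ?thesis by (simp add: algebra_simps)
  next
    case False then show ?thesis by (auto simp: f_out)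
  qed
  have "((\<lambda>t. (h * max (1 - t) 0 + b * max (t - 1) 0) * fth t + h*(x-1) * fth t) has_integral (cst 1 + h*(x-1)*1)) UNIV"
    by (intro has_integral_add has_integral_mult_right f_intU cg_has)
  then have "((\<lambda>t. (h * max (x - t) 0 + b * max (t - x) 0) * fth t) has_integral (cst 1 + h*(x-1))) UNIV"
    unfolding eq by simp
  then show ?thesis by (rule has_integral_unique[OF cg_has[of x]])
qed

lemma cost_le0: assumes x: "x \<le> 0" shows "cst x = cst 0 + b*(0-x)"
proof -
  have eq: "(h * max (x - t) 0 + b * max (t - x) 0) * fth t = (h * max (0 - t) 0 + b * max (t - 0) 0) * fth t + b*(0-x) * fth t" for t
  proof (cases "0 \<le> t \<and> t \<le> 1")
    case True then have "max (x-t) 0 = 0" "max (t-x) 0 = t - x" "max (0-t) 0 = 0" "max (t-0) 0 = t" using x by auto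
    then show ?thesis by (simp add: algebra_simps)
  next
    case False then show ?thesis by (auto simp: f_out)
  qed
  have "((\<lambda>t. (h * max (0 - t) 0 + b * max (t - 0) 0) * fth t + b*(0-x) * fth t) has_integral (cst 0 + b*(0-x)*1)) UNIV"
    by (intro has_integral_add has_integral_mult_right f_intU cg_has)
  then have "((\<lambda>t. (h * max (x - t) 0 + b * max (t - x) 0) * fth t) has_integral (cst 0 + b*(0-x))) UNIV"
    unfolding eq by simp
  then show ?thesis by (rule has_integral_unique[OF cg_has[of x]])
qed

lemma cost_lip: "\<bar>cst x - cst y\<bar> \<le> (h+b) * \<bar>x - y\<bar>"
proof -
  let ?g = "\<lambda>t. (h * max (x - t) 0 + b * max (t - x) 0) * fth t - (h * max (y - t) 0 + b * max (t - y) 0) * fth t"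
  have gi: "(?g has_integral (cst x - cst y)) UNIV" by (intro has_integral_diff cg_has)
  have bi: "((\<lambda>t. ((h+b) * \<bar>x - y\<bar>) * fth t) has_integral ((h+b) * \<bar>x - y\<bar>) * 1) UNIV"
    by (intro has_integral_mult_right f_intU)
  have pw: "norm (?g t) \<le> ((h+b) * \<bar>x - y\<bar>) * fth t" for t
  proof -
    have A: "\<bar>max (x-t) 0 - max (y-t) 0\<bar> \<le> \<bar>x-y\<bar>" by (auto simp: max_def abs_if)
    have B: "\<bar>max (t-x) 0 - max (t-y) 0\<bar> \<le> \<bar>x-y\<bar>" by (auto simp: max_def abs_if)
    have "\<bar>h*(max (x-t) 0 - max (y-t) 0) + b*(max (t-x) 0 - max (t-y) 0)\<bar>
        \<le> \<bar>h*(max (x-t) 0 - max (y-t) 0)\<bar> + \<bar>b*(max (t-x) 0 - max (t-y) 0)\<bar>" by (rule abs_triangle_ineq)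
    also have "\<dots> \<le> h*\<bar>x-y\<bar> + b*\<bar>x-y\<bar>"
      using A B hp bp by (intro add_mono) (auto simp: abs_mult intro: mult_left_mono)
    finally have C: "\<bar>h*(max (x-t) 0 - max (y-t) 0) + b*(max (t-x) 0 - max (t-y) 0)\<bar> \<le> (h+b)*\<bar>x-y\<bar>"
      by (simp add: algebra_simps)
    have "?g t = (h*(max (x-t) 0 - max (y-t) 0) + b*(max (t-x) 0 - max (t-y) 0)) * fth t"
      by (simp add: algebra_simps)
    then have "norm (?g t) = \<bar>h*(max (x-t) 0 - max (y-t) 0) + b*(max (t-x) 0 - max (t-y) 0)\<bar> * fth t"
      using f_nonneg[of th t] by (simp add: abs_mult)
    also have "\<dots> \<le> ((h+b) * \<bar>x - y\<bar>) * fth t"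
      using C f_nonneg[of th t] by (rule mult_right_mono)
    finally show ?thesis .
  qed
  have "norm (integral UNIV ?g) \<le> integral UNIV (\<lambda>t. ((h+b) * \<bar>x - y\<bar>) * fth t)"
    using gi bi pw by (intro integral_norm_bound_integral) auto
  then show ?thesis using integral_unique[OF gi] integral_unique[OF bi] f_integral by simp
qed

lemma cost_cont: "continuous_on S cst"
proof -
  have "(h+b)-lipschitz_on UNIV cst"
    by (rule lipschitz_onI) (use cost_lip hp bp in \<open>auto simp: dist_real_def\<close>)
  then have "continuous_on UNIV cst" by (rule lipschitz_on_continuous_on)
  then show ?thesis by (rule continuous_on_subset) auto
qed

lemma min_exists: "\<exists>xs. \<forall>y. cst xs \<le> cst y"
proof -
  obtain xs where xs: "xs \<in> {0..1}" "\<forall>y\<in>{0..1}. cst xs \<le> cst y"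
    using continuous_attains_inf[OF compact_Icc _ cost_cont, of 0 1] by auto
  have "cst xs \<le> cst y" for y
  proof -
    consider "y \<in> {0..1}" | "y > 1" | "y < 0" by fastforce
    then show ?thesis
    proof cases
      case 1 then show ?thesis using xs by auto
    next
      case 2 then show ?thesis using cost_ge1[of y] xs(2) hp by (smt (verit) atLeastAtMost_iff mult_pos_pos)
    next
      case 3 then show ?thesis using cost_le0[of y] xs(2) bp by (smt (verit) atLeastAtMost_iff mult_pos_pos)
    qed
  qed
  then show ?thesis by blast
qed

lemma min_le1: "\<forall>y. cst xs \<le> cst y \<Longrightarrow> xs \<le> 1"
proof (rule ccontr)
  assume m: "\<forall>y. cst xs \<le> cst y" and "\<not> xs \<le> 1"
  then have "xs > 1" by simp
  then have "cst xs > cst 1" using cost_ge1[of xs] hp by (simp add: mult_pos_pos)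
  then show False using m[rule_format, of 1] by linarith
qed

lemma A1: "\<forall>y. cst xs \<le> cst y \<Longrightarrow> \<forall>x\<in>{0..xs}. al \<le> fth x"
  using min_le1 f_ge by force

lemma F_ge1: "1 \<le> x \<Longrightarrow> nv_F rho al th x = 1"
  unfolding nv_F_def
  by (rule integral_unique, rule has_integral_on_superset[OF f_int01]) (auto simp: f_out)

lemma F_neg: "nv_F rho al th (-1) = 0"
  unfolding nv_F_def by (rule integral_unique, rule has_integral_is_0) (auto simp: f_out)

lemma A2: "bdd_above {x. nv_F rho al th x < 1} \<and> Sup {x. nv_F rho al th x < 1} \<le> 1"
proof -
  have lt: "x < 1" if "x \<in> {x. nv_F rho al th x < 1}" for x
    using that F_ge1[of x] by force
  have "-1 \<in> {x. nv_F rho al th x < 1}" using F_neg by simp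
  then have ne: "{x. nv_F rho al th x < 1} \<noteq> {}" by blast
  have "bdd_above {x. nv_F rho al th x < 1}" using lt by (intro bdd_aboveI[of _ 1]) (simp add: less_imp_le)
  moreover have "Sup {x. nv_F rho al th x < 1} \<le> 1" using lt ne by (intro cSup_least) (auto simp: less_imp_le)
  ultimately show ?thesis by blast
qed

end

context nvp begin
lemma l1_ex: "\<exists>c. \<forall>t. nv_l1 rho al t = c + t" using l1_shift by blast
lemma valpos: "0 < al + (1-al)*(cos y + 1)"
proof -
  have "0 \<le> (1-al)*(cos y + 1)" using ah cosp1[of y] by (intro mult_nonneg_nonneg) auto
  then show ?thesis using a0 by linarith
qed
end

context nvq begin

abbreviation "sc \<equiv> \<lambda>x. deriv (\<lambda>t. ln (nv_f rho al t x)) th * fth x"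

lemma sc_out: "x < 0 \<or> x > 1 \<Longrightarrow> sc x = 0" by (simp add: f_out)

lemma sc_z1: assumes "0 \<le> x" "x < L" shows "sc x = 0"
proof -
  obtain c0 where l1c: "\<And>t. nv_l1 rho al t = c0 + t" using l1_ex by blast
  have "deriv (\<lambda>t. ln (nv_f rho al t x)) th = 0"
  proof (rule deriv_local[where U="{x - c0 <..}" and k="\<lambda>_. ln (2-al)"])
    show "th \<in> {x - c0<..}" using assms l1c[of th] by simp
    show "ln (2-al) = ln (nv_f rho al t x)" if "t \<in> {x - c0<..}" for t
      using that assms Lr l1c[of t] by (subst f_A) auto
  qed (auto intro!: derivative_eq_intros)
  then show ?thesis by simp
qed

lemma sc_z3: assumes "L + rho/2 < x" "x < L + rho/2 + 1/4" shows "sc x = 0"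
proof -
  obtain c0 where l1c: "\<And>t. nv_l1 rho al t = c0 + t" using l1_ex by blast
  have "deriv (\<lambda>t. ln (nv_f rho al t x)) th = 0"
  proof (rule deriv_local[where U="{x - c0 - rho/2 - 1/4 <..< x - c0 - rho/2}" and k="\<lambda>_. ln al"])
    show "th \<in> {x - c0 - rho/2 - 1/4 <..< x - c0 - rho/2}" using assms l1c[of th] by simp
    show "ln al = ln (nv_f rho al t x)" if "t \<in> {x - c0 - rho/2 - 1/4 <..< x - c0 - rho/2}" for t
      using that assms Lr Lpos r0 r1 l1c[of t] by (subst f_C) (auto simp: l2_eq r2_eq)
  qed (auto intro!: derivative_eq_intros)
  then show ?thesis by simp
qed

lemma sc_z5: assumes "L + 3/4 < x" "x \<le> 1" shows "sc x = 0"
proof -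
  obtain c0 where l1c: "\<And>t. nv_l1 rho al t = c0 + t" using l1_ex by blast
  have "deriv (\<lambda>t. ln (nv_f rho al t x)) th = 0"
  proof (rule deriv_local[where U="{..< x - c0 - 3/4}" and k="\<lambda>_. ln (2-al)"])
    show "th \<in> {..< x - c0 - 3/4}" using assms l1c[of th] by simp
    show "ln (2-al) = ln (nv_f rho al t x)" if "t \<in> {..< x - c0 - 3/4}" for t
      using that assms Lpos l1c[of t] by (subst f_A) (auto simp: r1_eq)
  qed (auto intro!: derivative_eq_intros)
  then show ?thesis by simp
qed

lemma sc_1: assumes "L < x" "x < L + rho/2"
  shows "sc x = (1-al) * nv_w1 rho * sin (nv_w1 rho * (x - L))"
proof -
  obtain c0 where l1c: "\<And>t. nv_l1 rho al t = c0 + t" using l1_ex by blast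
  define V where "V = al + (1-al)*(cos (nv_w1 rho * (x - (c0+th))) + 1)"
  have Vp: "0 < V" unfolding V_def by (rule valpos)
  have x01: "0 \<le> x" "x \<le> 1" using assms Lpos Lr r0 r1 by auto
  have "deriv (\<lambda>t. ln (nv_f rho al t x)) th = (1-al) * (sin (nv_w1 rho * (x - (c0+th))) * nv_w1 rho) / V"
  proof (rule deriv_local[where U="{x - c0 - rho/2 <..< x - c0}"
        and k="\<lambda>t. ln (al + (1-al)*(cos (nv_w1 rho * (x - (c0+t))) + 1))"])
    show "th \<in> {x - c0 - rho/2 <..< x - c0}" using assms l1c[of th] by simp
    show "ln (al + (1-al)*(cos (nv_w1 rho * (x - (c0+t))) + 1)) = ln (nv_f rho al t x)"
      if "t \<in> {x - c0 - rho/2 <..< x - c0}" for t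
      using that x01 l1c[of t] by (subst f_B) (auto simp: l2_eq nv_cos1_def)
    show "((\<lambda>t. ln (al + (1-al)*(cos (nv_w1 rho * (x - (c0+t))) + 1))) has_real_derivative
        (1-al) * (sin (nv_w1 rho * (x - (c0+th))) * nv_w1 rho) / V) (at th)"
      using Vp unfolding V_def by (auto intro!: derivative_eq_intros simp: field_simps)
  qed simp
  moreover have "fth x = V" using x01 assms l1c[of th] unfolding V_def
    by (subst f_B) (auto simp: l2_eq nv_cos1_def)
  ultimately show ?thesis using Vp l1c[of th] by simp
qed

lemma sc_2: assumes "L + rho/2 + 1/4 < x" "x < L + 3/4"
  shows "sc x = - (1-al) * nv_w2 rho * sin (nv_w2 rho * (L + 3/4 - x))"
proof -
  obtain c0 where l1c: "\<And>t. nv_l1 rho al t = c0 + t" using l1_ex by blast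
  define V where "V = al + (1-al)*(cos (nv_w2 rho * (c0 + th + 3/4 - x)) + 1)"
  have Vp: "0 < V" unfolding V_def by (rule valpos)
  have x01: "0 \<le> x" "x \<le> 1" using assms Lpos Lr r0 r1 by auto
  have "deriv (\<lambda>t. ln (nv_f rho al t x)) th = - ((1-al) * (sin (nv_w2 rho * (c0 + th + 3/4 - x)) * nv_w2 rho)) / V"
  proof (rule deriv_local[where U="{x - c0 - 3/4 <..< x - c0 - rho/2 - 1/4}"
        and k="\<lambda>t. ln (al + (1-al)*(cos (nv_w2 rho * (c0 + t + 3/4 - x)) + 1))"])
    show "th \<in> {x - c0 - 3/4 <..< x - c0 - rho/2 - 1/4}" using assms l1c[of th] by simp
    show "ln (al + (1-al)*(cos (nv_w2 rho * (c0 + t + 3/4 - x)) + 1)) = ln (nv_f rho al t x)"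
      if "t \<in> {x - c0 - 3/4 <..< x - c0 - rho/2 - 1/4}" for t
      using that x01 l1c[of t] by (subst f_D) (auto simp: r1_eq r2_eq nv_cos2_def)
    show "((\<lambda>t. ln (al + (1-al)*(cos (nv_w2 rho * (c0 + t + 3/4 - x)) + 1))) has_real_derivative
        - ((1-al) * (sin (nv_w2 rho * (c0 + th + 3/4 - x)) * nv_w2 rho)) / V) (at th)"
      using Vp unfolding V_def by (auto intro!: derivative_eq_intros simp: field_simps)
  qed simp
  moreover have "fth x = V" using x01 assms l1c[of th] unfolding V_def
    by (subst f_D) (auto simp: r1_eq r2_eq nv_cos2_def)
  ultimately have s: "sc x = - ((1-al) * (sin (nv_w2 rho * (c0 + th + 3/4 - x)) * nv_w2 rho))" using Vp by simp
  have e: "L + 3/4 - x = c0 + th + 3/4 - x" using l1c[of th] by simp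
  show ?thesis unfolding s e by (simp add: algebra_simps)
qed

lemma A4: "(sc has_integral 0) UNIV"
proof -
  have j1: "(sc has_integral 0) {0..L}"
    by (rule ftc_spike[where G="\<lambda>_. 0" and G'="\<lambda>_. 0"]) (use Lpos sc_z1 in auto)
  have j2: "(sc has_integral (2*(1-al))) {L..L+rho/2}"
  proof (rule ftc_spike[where G="\<lambda>y. - (1-al) * cos (nv_w1 rho * (y - L))"
        and G'="\<lambda>y. (1-al) * nv_w1 rho * sin (nv_w1 rho * (y - L))"])
    show "L \<le> L + rho/2" using r0 by simp
    show "((\<lambda>y. - (1-al) * cos (nv_w1 rho * (y - L))) has_real_derivative
        (1-al) * nv_w1 rho * sin (nv_w1 rho * (y - L))) (at y)" for y
      by (auto intro!: derivative_eq_intros simp: algebra_simps)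
    show "sc y = (1-al) * nv_w1 rho * sin (nv_w1 rho * (y - L))" if "L < y" "y < L + rho/2" for y
      using sc_1 that by blast
    show "2*(1-al) = - (1-al) * cos (nv_w1 rho * (L + rho/2 - L)) - - (1-al) * cos (nv_w1 rho * (L - L))"
      by (simp only: w1L) simp
  qed
  have j3: "(sc has_integral 0) {L+rho/2..L+rho/2+1/4}"
    by (rule ftc_spike[where G="\<lambda>_. 0" and G'="\<lambda>_. 0"]) (use sc_z3 in auto)
  have j4: "(sc has_integral (-2*(1-al))) {L+rho/2+1/4..L+3/4}"
  proof (rule ftc_spike[where G="\<lambda>y. - (1-al) * cos (nv_w2 rho * (L + 3/4 - y))"
        and G'="\<lambda>y. - (1-al) * nv_w2 rho * sin (nv_w2 rho * (L + 3/4 - y))"])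
    show "L+rho/2+1/4 \<le> L + 3/4" using r1 by simp
    show "((\<lambda>y. - (1-al) * cos (nv_w2 rho * (L + 3/4 - y))) has_real_derivative
        - (1-al) * nv_w2 rho * sin (nv_w2 rho * (L + 3/4 - y))) (at y)" for y
      by (auto intro!: derivative_eq_intros simp: algebra_simps)
    show "sc y = - (1-al) * nv_w2 rho * sin (nv_w2 rho * (L + 3/4 - y))" if "L+rho/2+1/4 < y" "y < L + 3/4" for y
      using sc_2 that by blast
    have e: "nv_w2 rho * (L + 3/4 - (L+rho/2+1/4)) = pi"
    proof -
      have "L + 3/4 - (L+rho/2+1/4) = (1-rho)/2" by simp
      then show ?thesis using w2_half by (simp only:)
    qed
    show "-2*(1-al) = - (1-al) * cos (nv_w2 rho * (L + 3/4 - (L + 3/4))) - - (1-al) * cos (nv_w2 rho * (L + 3/4 - (L+rho/2+1/4)))"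
      by (simp only: e) simp
  qed
  have j5: "(sc has_integral 0) {L+3/4..1}"
    by (rule ftc_spike[where G="\<lambda>_. 0" and G'="\<lambda>_. 0"]) (use Lr sc_z5 in auto)
  have "(sc has_integral (0 + 2*(1-al) + 0 + -2*(1-al) + 0)) {0..1}"
    using Lpos Lr r0 r1
    by (intro has_integral_combine[OF _ _ has_integral_combine[OF _ _ has_integral_combine[OF _ _ has_integral_combine[OF _ _ j1 j2] j3] j4] j5]) auto
  then have "(sc has_integral 0) {0..1}" by simp
  then show ?thesis by (rule has_integral_on_superset) (auto simp: f_out)
qed

end

context nvq begin
lemma main: shows "\<comment> \<open>well-definedness: the pieces cover [0,1] and every clause of the definition holds\<close>
      ({0..1} \<subseteq> {0..nv_l1 rho al th} \<union> {nv_r1 rho al th..1} \<union> {nv_l2 rho al th<..nv_r2 rho al th}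
                 \<union> {nv_l1 rho al th..nv_l2 rho al th} \<union> {nv_r2 rho al th..nv_r1 rho al th}) \<and>
      (\<forall>x. x \<notin> {0..1} \<longrightarrow> nv_f rho al th x = 0) \<and>
      (\<forall>x\<in>{0..1}.
         (x \<in> {0..nv_l1 rho al th} \<union> {nv_r1 rho al th..1} \<longrightarrow> nv_f rho al th x = 2 - al) \<and>
         (x \<in> {nv_l2 rho al th<..nv_r2 rho al th} \<longrightarrow> nv_f rho al th x = al) \<and>
         (x \<in> {nv_l1 rho al th..nv_l2 rho al th} \<longrightarrow> nv_f rho al th x = nv_cos1 rho al th x) \<and>
         (x \<in> {nv_r2 rho al th..nv_r1 rho al th} \<longrightarrow> nv_f rho al th x = nv_cos2 rho al th x)) \<and>
      \<comment> \<open>probability density\<close>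
      (\<forall>x. 0 \<le> nv_f rho al th x) \<and> (nv_f rho al th has_integral 1) UNIV \<and>
      \<comment> \<open>(A1), with existence of the minimizer x*\<close>
      (\<exists>xs. \<forall>y. nv_cost h b rho al th xs \<le> nv_cost h b rho al th y) \<and>
      (\<forall>xs. (\<forall>y. nv_cost h b rho al th xs \<le> nv_cost h b rho al th y) \<longrightarrow>
            (\<forall>x\<in>{0..xs}. al \<le> nv_f rho al th x)) \<and>
      \<comment> \<open>(A2)\<close>
      bdd_above {x. nv_F rho al th x < 1} \<and> Sup {x. nv_F rho al th x < 1} \<le> 1 \<and>
      \<comment> \<open>(A3)\<close>
      (\<forall>x. abs_cont_on {-al/20..al/20} (\<lambda>t. nv_f rho al t x)) \<and>
      \<comment> \<open>(A4): expectation of the score is zero\<close>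
      ((\<lambda>x. deriv (\<lambda>t. ln (nv_f rho al t x)) th * nv_f rho al th x) has_integral 0) UNIV"
  apply (intro conjI)
  subgoal using Lpos Lr r0 r1 by (auto simp: l2_eq r2_eq r1_eq)
  subgoal using f_out by auto
  subgoal by (auto intro: f_A f_B f_D f_C)
  subgoal using f_nonneg by auto
  subgoal by (rule f_intU)
  subgoal by (rule min_exists)
  subgoal using A1 by blast
  subgoal using A2 by (rule conjunct1)
  subgoal using A2 by (rule conjunct2)
  subgoal using A3 by blast
  subgoal by (rule A4)
  done
end

theorem lemma2:
  shows "\<exists>K::real. \<forall>(h::real) (b::real) (\<rho>::real) (\<alpha>::real) (\<theta>::real).
    0 < h \<and> 0 < b \<and> \<rho> = b / (h + b) \<and> 0 < \<rho> \<and> \<rho> < 1 \<and>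
    0 < \<alpha> \<and> \<alpha> \<le> min (1/2) (min (2 * \<rho>) (2 * (1 - \<rho>))) \<and>
    \<theta> \<in> {-\<alpha>/20..\<alpha>/20}
    \<longrightarrow>
      \<comment> \<open>well-definedness: the pieces cover [0,1] and every clause of the definition holds\<close>
      ({0..1} \<subseteq> {0..nv_l1 \<rho> \<alpha> \<theta>} \<union> {nv_r1 \<rho> \<alpha> \<theta>..1} \<union> {nv_l2 \<rho> \<alpha> \<theta><..nv_r2 \<rho> \<alpha> \<theta>}
                 \<union> {nv_l1 \<rho> \<alpha> \<theta>..nv_l2 \<rho> \<alpha> \<theta>} \<union> {nv_r2 \<rho> \<alpha> \<theta>..nv_r1 \<rho> \<alpha> \<theta>}) \<and>
      (\<forall>x. x \<notin> {0..1} \<longrightarrow> nv_f \<rho> \<alpha> \<theta> x = 0) \<and>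
      (\<forall>x\<in>{0..1}.
         (x \<in> {0..nv_l1 \<rho> \<alpha> \<theta>} \<union> {nv_r1 \<rho> \<alpha> \<theta>..1} \<longrightarrow> nv_f \<rho> \<alpha> \<theta> x = 2 - \<alpha>) \<and>
         (x \<in> {nv_l2 \<rho> \<alpha> \<theta><..nv_r2 \<rho> \<alpha> \<theta>} \<longrightarrow> nv_f \<rho> \<alpha> \<theta> x = \<alpha>) \<and>
         (x \<in> {nv_l1 \<rho> \<alpha> \<theta>..nv_l2 \<rho> \<alpha> \<theta>} \<longrightarrow> nv_f \<rho> \<alpha> \<theta> x = nv_cos1 \<rho> \<alpha> \<theta> x) \<and>
         (x \<in> {nv_r2 \<rho> \<alpha> \<theta>..nv_r1 \<rho> \<alpha> \<theta>} \<longrightarrow> nv_f \<rho> \<alpha> \<theta> x = nv_cos2 \<rho> \<alpha> \<theta> x)) \<and>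
      \<comment> \<open>probability density\<close>
      (\<forall>x. 0 \<le> nv_f \<rho> \<alpha> \<theta> x) \<and> (nv_f \<rho> \<alpha> \<theta> has_integral 1) UNIV \<and>
      \<comment> \<open>(A1), with existence of the minimizer x*\<close>
      (\<exists>xs. \<forall>y. nv_cost h b \<rho> \<alpha> \<theta> xs \<le> nv_cost h b \<rho> \<alpha> \<theta> y) \<and>
      (\<forall>xs. (\<forall>y. nv_cost h b \<rho> \<alpha> \<theta> xs \<le> nv_cost h b \<rho> \<alpha> \<theta> y) \<longrightarrow>
            (\<forall>x\<in>{0..xs}. \<alpha> \<le> nv_f \<rho> \<alpha> \<theta> x)) \<and>
      \<comment> \<open>(A2)\<close>
      bdd_above {x. nv_F \<rho> \<alpha> \<theta> x < 1} \<and> Sup {x. nv_F \<rho> \<alpha> \<theta> x < 1} \<le> K \<and>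
      \<comment> \<open>(A3)\<close>
      (\<forall>x. abs_cont_on {-\<alpha>/20..\<alpha>/20} (\<lambda>t. nv_f \<rho> \<alpha> t x)) \<and>
      \<comment> \<open>(A4): expectation of the score is zero\<close>
      ((\<lambda>x. deriv (\<lambda>t. ln (nv_f \<rho> \<alpha> t x)) \<theta> * nv_f \<rho> \<alpha> \<theta> x) has_integral 0) UNIV"
  apply (intro exI[of _ 1] allI impI nvq.main)
  apply unfold_locales
  apply auto
  done

end
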